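(* Let $p$ be a prime and $e\geq 2$ an integer. For each integer $r\geq 2$ let $S(p,e,r)$ be the smallest set of positive integers such that $r\in S$, $n\in S$ whenever $n^e\in S$, and $(n+p)^e\in S$ whenever $n\in S$. Let $V=\bigcup_{r\geq 2}S(p,e,r)$ and let $\Gamma(p,e)$ be the directed graph on $V$ with up-edges $(n,(n+p)^e)$ and down-edges $(n^e,n)$ for $n\in V$. Then no path in $\Gamma(p,e)$ contains $UUDD$ as a subpath; that is, there do not exist vertices $x,a,z,b,y\in V$ with $a=(x+p)^e$, $z=(a+p)^e$, $z=b^e$ and $b=y^e$.
   Context: Each edge of a path is labelled $U$ if it is an up-edge and $D$ if it is a down-edge; a path contains $UUDD$ as a subpath if it has four consecutive edges labelled $U,U,D,D$. *)

theory Defs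
  imports "HOL-Computational_Algebra.Primes"
begin

text \<open>All elements are automatically positive since r \<ge> 2 is positive.\<close>
inductive_set Sset :: "nat \<Rightarrow> nat \<Rightarrow> nat \<Rightarrow> nat set"
  for p :: nat and e :: nat and r :: nat where
  base: "r \<in> Sset p e r"
| root: "n ^ e \<in> Sset p e r \<Longrightarrow> n \<in> Sset p e r"
| up: "n \<in> Sset p e r \<Longrightarrow> (n + p) ^ e \<in> Sset p e r"

definition Vset :: "nat \<Rightarrow> nat \<Rightarrow> nat set" where
  "Vset p e = (\<Union>r\<in>{2..}. Sset p e r)"

end

theory Submission
  imports Defs
begin

lemma key:
  fixes m p k y :: nat
  assumes "0 < p" "p \<le> m" and "k \<ge> 1" and eq: "m ^ Suc k + p = y ^ Suc k"
  shows False
proof -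
  have "m ^ Suc k < y ^ Suc k" using eq assms(1) by linarith
  hence "m < y" by (rule power_less_imp_less_base) simp
  hence "Suc m \<le> y" by simp
  hence A: "(Suc m) ^ Suc k \<le> y ^ Suc k" by (rule power_mono) simp
  have B: "m ^ k \<le> (Suc m) ^ k" by (rule power_mono) simp_all
  have C: "Suc m \<le> (Suc m) ^ k" using assms(3)
    using power_increasing[of 1 k "Suc m"] by simp
  have "(Suc m) ^ Suc k = (Suc m)^k * m + (Suc m)^k" by simp
  moreover have "m ^ Suc k \<le> (Suc m)^k * m" using B by (simp add: mult.commute)
  ultimately have "m ^ Suc k + Suc m \<le> (Suc m) ^ Suc k" using C by linarith
  then show False using A eq assms(2)
  proof -
    assume X: "m ^ Suc k + Suc m \<le> Suc m ^ Suc k"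
    define P where "P = m ^ Suc k"
    define Q where "Q = Suc m ^ Suc k"
    define R where "R = y ^ Suc k"
    have "P + Suc m \<le> Q" "Q \<le> R" "P + p = R" "p \<le> m"
      using X A eq assms(2) unfolding P_def Q_def R_def by simp_all
    thus False by linarith
  qed
qed

theorem theorem24:
  fixes p e :: nat
  assumes "prime p" and "e \<ge> 2"
  shows "\<not> (\<exists>x a z b y. x \<in> Vset p e \<and> a \<in> Vset p e \<and> z \<in> Vset p e \<and>
              b \<in> Vset p e \<and> y \<in> Vset p e \<and>
              a = (x + p) ^ e \<and> z = (a + p) ^ e \<and> z = b ^ e \<and> b = y ^ e)"
proof
  assume "\<exists>x a z b y. x \<in> Vset p e \<and> a \<in> Vset p e \<and> z \<in> Vset p e \<and>
              b \<in> Vset p e \<and> y \<in> Vset p e \<and>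
              a = (x + p) ^ e \<and> z = (a + p) ^ e \<and> z = b ^ e \<and> b = y ^ e"
  then obtain x a z b y where h: "a = (x + p) ^ e" "z = (a + p) ^ e" "z = b ^ e" "b = y ^ e"
    by blast
  have e0: "e > 0" using assms(2) by simp
  have "a + p = b" using h(2,3) e0 using power_eq_iff_eq_base[of e "a+p" b] by simp
  obtain k where k0: "e = Suc k" using e0 gr0_implies_Suc by blast
  have k: "e = Suc k" "k \<ge> 1" using k0 assms(2) by simp_all
  have pp: "p > 0" using assms(1) prime_gt_0_nat by blast
  have "(x + p) ^ Suc k + p = y ^ Suc k" using h(1,4) k(1) \<open>a + p = b\<close> by metis
  moreover have "p \<le> x + p" by simp
  ultimately show False using key[of p "x + p" k y] pp k(2) by blast
qed

end
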